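(* Let $F(x)=\frac{1-x-\sqrt{1-2x-3x^2}}{2x^2}$ be the generating function of the Motzkin numbers. Then $D_{3,-3}(0)=1$, $D_{3,-3}(1)=D_{3,-3}(2)=D_{3,-3}(3)=0$, and for every integer $k\ge1$, $$D_{3,-3}(3k+1)=k,\qquad D_{3,-3}(3k+2)=0,\qquad D_{3,-3}(3k+3)=-k.$$
   Context: For a power series $F(x)=\sum_{n\ge0}a_nx^n$ and $K\ge1$, write $F(x)^K=\sum_{n\ge0}a_{K,n}x^n$ and set $a_{K,n}=0$ for $n<0$. For $M\in\mathbb{Z}$ and $K,N\in\mathbb{N}$ with $K\ge1$, define the shifted Hankel determinant $D_{K,M}(N)=\det(a_{K,i+j+M})_{i,j=0}^{N-1}$, with $D_{K,M}(0)=1$. *)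

theory Defs
  imports "HOL-Computational_Algebra.Formal_Power_Series" "Jordan_Normal_Form.Determinant"
begin

text \<open>Square root of a power series with constant term 1: the radical with the
  root of the constant term chosen as 1 (the principal branch used in the paper).\<close>
definition motzkin_gf :: "real fps" where
  "motzkin_gf = (1 - fps_X - fps_radical (\<lambda>_ _. 1) 2 (1 - 2 * fps_X - 3 * fps_X ^ 2))
                 / (2 * fps_X ^ 2)"

definition pow_coeff :: "real fps \<Rightarrow> nat \<Rightarrow> int \<Rightarrow> real" where
  "pow_coeff F K n = (if n < 0 then 0 else fps_nth (F ^ K) (nat n))"

definition hankel_det :: "real fps \<Rightarrow> nat \<Rightarrow> int \<Rightarrow> nat \<Rightarrow> real" where
  "hankel_det F K M N = det (mat N N (\<lambda>(i, j). pow_coeff F K (int i + int j + M)))"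

end

theory Submission
  imports Defs
begin

abbreviation "MM \<equiv> motzkin_gf"

lemma rad_sq: "(fps_radical (\<lambda>_ _. 1) 2 (1 - 2 * fps_X - 3 * fps_X ^ 2 :: real fps)) ^ 2
   = 1 - 2 * fps_X - 3 * fps_X ^ 2"
proof -
  have "(fps_radical (\<lambda>_ _. 1) (Suc 1) (1 - 2 * fps_X - 3 * fps_X ^ 2 :: real fps)) ^ (Suc 1)
   = 1 - 2 * fps_X - 3 * fps_X ^ 2"
    by (subst power_radical[symmetric]) (simp_all add: power2_eq_square)
  thus ?thesis by (simp add: numeral_2_eq_2)
qed

lemma motzkin_quad: "fps_X^2 * MM^2 - (1 - fps_X) * MM + 1 = 0"
proof -
  define R :: "real fps" where "R = fps_radical (\<lambda>_ _. 1) 2 (1 - 2 * fps_X - 3 * fps_X ^ 2)"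
  define S :: "real fps" where "S = 1 - 2 * fps_X - 3 * fps_X ^ 2"
  have RS: "R^2 = S" unfolding R_def S_def by (rule rad_sq)
  have R0: "fps_nth R 0 = 1" unfolding R_def by simp
  have "fps_nth (R^2) 1 = fps_nth S 1" using RS by simp
  hence "2 * fps_nth R 0 * fps_nth R 1 = -2" unfolding S_def by (simp add: power2_eq_square fps_mult_nth_1)
  hence R1: "fps_nth R 1 = -1" using R0 by simp
  define num where "num = 1 - fps_X - R"
  have n0: "fps_nth num 0 = 0" "fps_nth num 1 = 0" using R0 R1 by (simp_all add: num_def)
  define h where "h = fps_shift 2 num"
  have numh: "num = fps_X^2 * h"
  proof (rule fps_ext)
    fix n show "fps_nth num n = fps_nth (fps_X^2 * h) n"
    proof (cases "n < 2")
      case True thus ?thesis using n0 by (auto simp: fps_X_power_mult_nth less_2_cases_iff)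
    next
      case False
      hence e: "n - 2 + 2 = n" by arith
      have "fps_nth (fps_X^2 * h) n = fps_nth h (n-2)" using False by (simp add: fps_X_power_mult_nth)
      also have "\<dots> = fps_nth num n" unfolding h_def using e by simp
      finally show ?thesis by simp
    qed
  qed
  have "MM = num / (2 * fps_X^2)" unfolding motzkin_gf_def num_def R_def by simp
  have two: "(2::real fps) * fps_const (1/2) = 1"
    by (simp add: numeral_fps_const)
  have "num = (2 * fps_X^2) * (fps_const (1/2) * h)" using numh two
    by (metis (no_types, lifting) mult.assoc mult.commute mult.left_neutral)
  hence "MM = (2 * fps_X^2) * (fps_const (1/2) * h) / (2 * fps_X^2)" 
    using \<open>MM = num / (2 * fps_X^2)\<close> by simp
  hence MMh: "MM = fps_const (1/2) * h" by simp
  have "2 * fps_X^2 * MM = fps_X^2 * ((2 * fps_const (1/2)) * h)" unfolding MMh by (simp only: mult_ac)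
  also have "\<dots> = num" using two numh by simp
  finally have "2 * fps_X^2 * MM = num" .
  hence Rm: "R = 1 - fps_X - 2 * fps_X^2 * MM" unfolding num_def by (simp add: algebra_simps)
  have "(1 - fps_X - 2 * fps_X^2 * MM)^2 = S" using RS Rm by simp
  hence "(4 * fps_X^2) * (fps_X^2 * MM^2 - (1 - fps_X) * MM + 1) = 0" unfolding S_def
    by (simp add: algebra_simps power2_eq_square)
  thus ?thesis by simp
qed

definition hank :: "(nat \<Rightarrow> real) \<Rightarrow> nat \<Rightarrow> real mat" where
  "hank f N = mat N N (\<lambda>(i,j). f (i+j))"

lemma anti_det:
  fixes A :: "real mat"
  assumes "A \<in> carrier_mat n n"
    and "\<And>i j. i < n \<Longrightarrow> j < n \<Longrightarrow> i + j < n - 1 \<Longrightarrow> A $$ (i,j) = 0"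
    and "\<And>i. i < n \<Longrightarrow> A $$ (i, n-1-i) = a"
  shows "det A = (-1)^(n*(n-1) div 2) * a^n"
  using assms
proof (induction n arbitrary: A)
  case 0
  thus ?case by simp
next
  case (Suc m)
  note A = Suc.prems(1)
  have "det A = (\<Sum>j<Suc m. A $$ (0,j) * cofactor A 0 j)"
    by (rule laplace_expansion_row[OF A]) simp
  also have "\<dots> = A $$ (0,m) * cofactor A 0 m"
  proof -
    have "(\<Sum>j<Suc m. A $$ (0,j) * cofactor A 0 j) = (\<Sum>j<m. A $$ (0,j) * cofactor A 0 j) + A $$ (0,m) * cofactor A 0 m"
      by simp
    moreover have "(\<Sum>j<m. A $$ (0,j) * cofactor A 0 j) = 0"
      by (rule sum.neutral) (auto simp: Suc.prems(2))
    ultimately show ?thesis by simp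
  qed
  also have "A $$ (0,m) = a" using Suc.prems(3)[of 0] by simp
  also have "cofactor A 0 m = (-1)^m * det (mat_delete A 0 m)" unfolding cofactor_def by simp
  also have "det (mat_delete A 0 m) = (-1)^(m*(m-1) div 2) * a^m"
  proof (rule Suc.IH)
    show "mat_delete A 0 m \<in> carrier_mat m m" using mat_delete_carrier[OF A] by simp
    fix i j assume ij: "i < m" "j < m" "i + j < m - 1"
    have "mat_delete A 0 m $$ (i,j) = A $$ (Suc i, j)" using A ij unfolding mat_delete_def by auto
    also have "\<dots> = 0" using ij by (intro Suc.prems(2)) auto
    finally show "mat_delete A 0 m $$ (i,j) = 0" .
  next
    fix i assume i: "i < m"
    have "mat_delete A 0 m $$ (i, m-1-i) = A $$ (Suc i, m-1-i)" using A i unfolding mat_delete_def by auto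
    also have "\<dots> = a" using Suc.prems(3)[of "Suc i"] i by (simp add: Suc_diff_Suc)
    finally show "mat_delete A 0 m $$ (i, m-1-i) = a" .
  qed
  finally have "det A = a * ((-1)^m * ((-1)^(m*(m-1) div 2) * a^m))" .
  also have "\<dots> = (-1)^(m + m*(m-1) div 2) * a^(Suc m)" by (simp add: power_add)
  also have "m + m*(m-1) div 2 = Suc m * (Suc m - 1) div 2"
  proof -
    have "Suc m * (Suc m - 1) = 2 * m + m * (m - 1)" by (cases m) (auto simp: algebra_simps)
    thus ?thesis by simp
  qed
  finally show ?case .
qed

lemma sum_if_le:
  fixes j M :: nat
  assumes "j < M"
  shows "(\<Sum>r<M. if r \<le> j then h r else 0) = (\<Sum>r\<le>j. (h r :: real))"
proof -
  have "(\<Sum>r<M. if r \<le> j then h r else 0) = (\<Sum>r\<in>{..<M}. if r \<in> {..j} then h r else 0)" by simp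
  also have "\<dots> = sum h ({..<M} \<inter> {..j})" by (rule sum.inter_restrict[symmetric]) simp
  also have "{..<M} \<inter> {..j} = {..j}" using assms by auto
  finally show ?thesis .
qed

lemma sx_step:
  fixes F V G :: "real fps" and d N :: nat and c :: real
  assumes FV: "F * V = fps_X ^ d"
    and c: "fps_nth V 0 = c" and c0: "c \<noteq> 0"
    and VG: "\<And>k. k \<ge> d + 2 \<Longrightarrow> fps_nth V k = - fps_nth G (k - d - 2)"
    and N: "N \<ge> d + 1"
  shows "det (hank (fps_nth F) N) = (-1)^((d+1)*d div 2) * (1/c)^(2*N-d-1) * det (hank (fps_nth G) (N-d-1))"
proof -
  define f where "f = fps_nth F"
  define v where "v = fps_nth V"
  define g where "g = fps_nth G"
  have conv: "(\<Sum>k\<le>n. v k * f (n-k)) = (if n = d then 1 else 0)" for n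
  proof -
    have "fps_nth (V * F) n = fps_nth (fps_X ^ d) n" using FV by (simp add: mult.commute)
    thus ?thesis unfolding fps_mult_nth v_def f_def by (simp add: atLeast0AtMost)
  qed
  have Finv: "F = fps_X ^ d * inverse V"
  proof -
    have "F = F * (V * inverse V)" using c c0 by (simp add: inverse_mult_eq_1')
    also have "\<dots> = fps_X ^ d * inverse V" using FV by (simp add: mult.assoc[symmetric])
    finally show ?thesis .
  qed
  have fz: "f n = 0" if "n < d" for n using that unfolding f_def by (subst Finv) (simp add: fps_X_power_mult_nth)
  have fd: "f d = 1/c" unfolding f_def by (simp only: Finv fps_X_power_mult_nth) (simp add: c field_simps)
  define n' where "n' = N - d - 1"
  have Nn: "N = (d+1) + n'" using N unfolding n'_def by simp
  define Q :: "real mat" where "Q = mat N N (\<lambda>(i,l). if i \<le> d then (if i = l then 1 else 0) else if l \<le> i then v (i-l) else 0)"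
  define H where "H = hank f N"
  define A :: "real mat" where "A = mat (d+1) (d+1) (\<lambda>(i,j). f (i+j))"
  define B :: "real mat" where "B = mat (d+1) n' (\<lambda>(i,j). f (i+j+d+1))"
  define Hg where "Hg = hank g n'"
  define T :: "real mat" where "T = mat n' n' (\<lambda>(r,j). if r \<le> j then f (d + j - r) else 0)"
  have QH_low: "(\<Sum>l<N. Q $$ (i,l) * H $$ (l,j)) = (\<Sum>r<j. g (i-d-1+r) * f (j-1-r))"
    if i: "i < N" "d < i" and j: "j < N" for i j
  proof -
    have "(\<Sum>l<N. Q $$ (i,l) * H $$ (l,j)) = (\<Sum>l<N. if l \<le> i then v (i-l) * f (l+j) else 0)"
      by (rule sum.cong) (use i j in \<open>auto simp: Q_def H_def hank_def\<close>)
    also have "\<dots> = (\<Sum>l\<le>i. v (i-l) * f (l+j))" by (rule sum_if_le) (use i in auto)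
    also have "\<dots> = (\<Sum>k\<le>i. v k * f (i+j-k))"
      by (rule sum.reindex_bij_witness[of _ "\<lambda>k. i - k" "\<lambda>k. i - k"]) (auto simp: algebra_simps)
    also have "\<dots> = - (\<Sum>k\<in>{i<..i+j}. v k * f (i+j-k))"
    proof -
      have "{..i+j} = {..i} \<union> {i<..i+j}" by auto
      hence "(\<Sum>k\<le>i+j. v k * f (i+j-k)) = (\<Sum>k\<le>i. v k * f (i+j-k)) + (\<Sum>k\<in>{i<..i+j}. v k * f (i+j-k))"
        by (simp only:) (subst sum.union_disjoint, auto)
      moreover have "(\<Sum>k\<le>i+j. v k * f (i+j-k)) = 0" using conv[of "i+j"] i by simp
      ultimately show ?thesis by linarith
    qed
    also have "(\<Sum>k\<in>{i<..i+j}. v k * f (i+j-k)) = (\<Sum>r<j. v (i+1+r) * f (j-1-r))"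
      by (rule sum.reindex_bij_witness[of _ "\<lambda>r. i+1+r" "\<lambda>k. k - i - 1"]) (auto simp: add.commute)
    also have "\<dots> = (\<Sum>r<j. - g (i-d-1+r) * f (j-1-r))"
    proof (rule sum.cong)
      fix r assume "r \<in> {..<j}"
      have "v (i+1+r) = - g (i+1+r-d-2)" unfolding v_def g_def using i by (intro VG) auto
      moreover have "i+1+r-d-2 = i-d-1+r" using i by auto
      ultimately show "v (i+1+r) * f (j-1-r) = - g (i-d-1+r) * f (j-1-r)" by simp
    qed simp
    finally show ?thesis by (simp add: sum_negf)
  qed
  have K: "Q * H = four_block_mat A B (0\<^sub>m n' (d+1)) (Hg * T)"
  proof (rule eq_matI)
    show "dim_row (Q * H) = dim_row (four_block_mat A B (0\<^sub>m n' (d+1)) (Hg * T))"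
      by (simp add: Q_def A_def Hg_def hank_def Nn)
    show "dim_col (Q * H) = dim_col (four_block_mat A B (0\<^sub>m n' (d+1)) (Hg * T))"
      by (simp add: H_def hank_def A_def T_def Nn)
    fix i j assume "i < dim_row (four_block_mat A B (0\<^sub>m n' (d+1)) (Hg * T))"
      "j < dim_col (four_block_mat A B (0\<^sub>m n' (d+1)) (Hg * T))"
    hence i: "i < N" and j: "j < N" by (simp_all add: A_def Hg_def hank_def T_def Nn)
    have QH: "(Q * H) $$ (i,j) = (\<Sum>l<N. Q $$ (i,l) * H $$ (l,j))"
      using i j by (simp add: Q_def H_def hank_def scalar_prod_def lessThan_atLeast0)
    have FB: "four_block_mat A B (0\<^sub>m n' (d+1)) (Hg * T) $$ (i,j) =
       (if i < d+1 then if j < d+1 then A $$ (i,j) else B $$ (i, j-(d+1))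
        else if j < d+1 then 0 else (Hg * T) $$ (i-(d+1), j-(d+1)))"
      using i j by (simp add: four_block_mat_def A_def Hg_def hank_def T_def Nn Let_def)
    show "(Q * H) $$ (i,j) = four_block_mat A B (0\<^sub>m n' (d+1)) (Hg * T) $$ (i,j)"
    proof (cases "i \<le> d")
      case True
      have "(\<Sum>l<N. Q $$ (i,l) * H $$ (l,j)) = (\<Sum>l<N. if l = i then f (i+j) else 0)"
        by (rule sum.cong) (use i j True in \<open>auto simp: Q_def H_def hank_def\<close>)
      also have "\<dots> = f (i+j)" using i by simp
      finally show ?thesis using QH FB True j by (auto simp: A_def B_def Nn)
    next
      case False
      hence id: "d < i" by simp
      note low = QH_low[OF i id j]
      show ?thesis
      proof (cases "j \<le> d")
        case True
        have "(\<Sum>r<j. g (i-d-1+r) * f (j-1-r)) = 0"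
          by (rule sum.neutral) (use True in \<open>auto intro!: fz\<close>)
        thus ?thesis using QH FB low True False by simp
      next
        case jF: False
        define j' where "j' = j - (d+1)"
        define i' where "i' = i - (d+1)"
        have j'n: "j' < n'" and i'n: "i' < n'" using i j jF False unfolding j'_def i'_def Nn by auto
        have "(\<Sum>r<j. g (i-d-1+r) * f (j-1-r)) = (\<Sum>r<j. if r \<le> j' then g (i'+r) * f (d+j'-r) else 0)"
        proof (rule sum.cong)
          fix r assume r: "r \<in> {..<j}"
          have e1: "j - 1 - r = d + j' - r" unfolding j'_def using jF by auto
          have e2: "i-d-1+r = i'+r" unfolding i'_def by simp
          show "g (i-d-1+r) * f (j-1-r) = (if r \<le> j' then g (i'+r) * f (d+j'-r) else 0)"
          proof (cases "r \<le> j'")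
            case True thus ?thesis by (simp only: e1 e2 if_P[OF True] if_True)
          next
            case False
            have "j - 1 - r < d" using False r jF by (auto simp: j'_def)
            thus ?thesis using False by (simp add: fz)
          qed
        qed simp
        also have "\<dots> = (\<Sum>r\<le>j'. g (i'+r) * f (d+j'-r))" by (rule sum_if_le) (use jF in \<open>auto simp: j'_def\<close>)
        also have "\<dots> = (\<Sum>r<n'. g (i'+r) * (if r \<le> j' then f (d+j'-r) else 0))"
          by (subst sum_if_le[symmetric, OF j'n]) (auto intro: sum.cong)
        also have "\<dots> = (Hg * T) $$ (i', j')"
          using i'n j'n by (simp add: Hg_def T_def hank_def scalar_prod_def lessThan_atLeast0)
        finally show ?thesis using QH FB low jF False unfolding i'_def j'_def by simp
      qed
    qed
  qed
  have Qc: "Q \<in> carrier_mat N N" and Hc: "H \<in> carrier_mat N N" by (simp_all add: Q_def H_def hank_def)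
  have Ac: "A \<in> carrier_mat (d+1) (d+1)" and Bc: "B \<in> carrier_mat (d+1) n'"
    and Hgc: "Hg \<in> carrier_mat n' n'" and Tc: "T \<in> carrier_mat n' n'"
    by (simp_all add: A_def B_def Hg_def T_def hank_def)
  have detQ: "det Q = c ^ n'"
  proof -
    have "det Q = prod_list (diag_mat Q)"
      by (rule det_lower_triangular[OF _ Qc]) (auto simp: Q_def)
    also have "\<dots> = (\<Prod>i = 0..<N. if i \<le> d then 1 else c)"
      unfolding prod_list_diag_prod using Qc by (intro prod.cong) (auto simp: Q_def c v_def)
    also have "\<dots> = (\<Prod>i\<in>{0..<N} \<inter> - {i. i \<le> d}. c)"
      by (simp add: prod.If_cases)
    also have "{0..<N} \<inter> - {i. i \<le> d} = {d+1..<N}" by auto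
    finally show ?thesis by (simp add: n'_def)
  qed
  have detT: "det T = (1/c) ^ n'"
  proof -
    have "det T = prod_list (diag_mat T)"
      by (rule det_upper_triangular[OF _ Tc]) (auto simp: T_def upper_triangular_def)
    also have "\<dots> = (\<Prod>i = 0..<n'. 1/c)"
      by (simp add: prod_list_diag_prod T_def fd)
    finally show ?thesis by simp
  qed
  have detA: "det A = (-1)^((d+1)*d div 2) * (1/c)^(d+1)"
  proof -
    have "det A = (-1)^((d+1)*(d+1-1) div 2) * (1/c)^(d+1)"
      by (rule anti_det[OF Ac]) (auto simp: A_def fz fd)
    thus ?thesis by simp
  qed
  have "det Q * det H = det (Q * H)" by (rule det_mult[OF Qc Hc, symmetric])
  also have "\<dots> = det A * det (Hg * T)" unfolding K
    by (rule det_four_block_mat_lower_left_zero[OF Ac Bc refl]) (use Hgc Tc in simp)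
  also have "det (Hg * T) = det Hg * det T" by (rule det_mult[OF Hgc Tc])
  finally have eq: "c ^ n' * det H = (-1)^((d+1)*d div 2) * (1/c)^(d+1) * (det Hg * (1/c)^n')"
    using detQ detA detT by simp
  have "det H = (-1)^((d+1)*d div 2) * ((1/c)^(d+1) * (1/c)^n' * (1/c)^n') * det Hg"
  proof -
    have "det H = (1/c)^n' * (c ^ n' * det H)" using c0 by (simp add: power_one_over)
    also note eq
    finally show ?thesis by (simp add: algebra_simps)
  qed
  also have "(1/c)^(d+1) * (1/c)^n' * (1/c)^n' = (1/c)^(2*N-d-1)"
    by (simp only: power_add[symmetric] Nn) (rule arg_cong[where f="\<lambda>n. (1/c)^n"], simp)
  finally show ?thesis unfolding H_def Hg_def f_def g_def n'_def by simp
qed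

lemma coeff_tail:
  fixes p G :: "real fps"
  assumes "\<And>k. k \<ge> m \<Longrightarrow> fps_nth p k = 0" and "k \<ge> m"
  shows "fps_nth (p - fps_X^m * G) k = - fps_nth G (k - m)"
  using assms by (simp add: fps_X_power_mult_nth)

definition ww :: "real fps" where "ww = fps_X^3 * MM^3"
definition PP :: "real fps" where "PP = 1 - 3 * fps_X + 2 * fps_X^3 - fps_X^3 * ww"
definition AA :: "real \<Rightarrow> real fps" where "AA k = fps_const (k^2) * ww - fps_const (k*(k+1))"
definition DD :: "real \<Rightarrow> real fps" where "DD k = fps_const ((k+1)^2) * PP - fps_const (k*(k+1)) * fps_X^3"
definition BB :: "real \<Rightarrow> real fps" where "BB k = fps_X * inverse (DD k)"
definition G1 :: "real fps" where "G1 = fps_X * MM^3"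

lemma wP: "ww * PP = fps_X^3"
proof -
  have q: "fps_X^2 * MM^2 - (1 - fps_X) * MM + 1 = 0" by (rule motzkin_quad)
  define t where "t = fps_X^2 * MM^2"
  define s where "s = (1 - fps_X) * MM - 1"
  have "ww * PP - fps_X^3 + fps_X^3 * (fps_X^2 * MM^2 - (1 - fps_X) * MM + 1) * (3 * (1 - fps_X) * MM + t^2 + t*s + s^2) = 0"
    unfolding ww_def PP_def t_def s_def by (simp add: eval_nat_numeral algebra_simps)
  thus ?thesis using q by simp
qed

lemma G1P: "G1 * PP = fps_X"
proof -
  have "fps_X^2 * (G1 * PP) = ww * PP" unfolding G1_def ww_def by (simp add: algebra_simps power_def)
  also have "\<dots> = fps_X^2 * fps_X" using wP by (simp add: power_def)
  finally show ?thesis by simp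
qed

lemma PP_tail0: "k \<ge> 5 \<Longrightarrow> fps_nth PP k = - fps_nth G1 (k - 5)"
proof -
  assume k: "k \<ge> 5"
  have "PP = (1 - 3 * fps_X + 2 * fps_X^3) - fps_X^5 * G1"
    unfolding PP_def ww_def G1_def by (simp add: algebra_simps power_def)
  also have "fps_nth \<dots> k = - fps_nth G1 (k - 5)"
    by (rule coeff_tail) (use k in \<open>auto simp: numeral_fps_const\<close>)
  finally show ?thesis .
qed

lemma PP_tail1: "k \<ge> 3 \<Longrightarrow> fps_nth PP k = - fps_nth (AA 1) (k - 3)"
proof -
  assume k: "k \<ge> 3"
  have "PP = (1 - 3 * fps_X) - fps_X^3 * AA 1"
    unfolding PP_def AA_def by (simp add: algebra_simps numeral_fps_const)
  also have "fps_nth \<dots> k = - fps_nth (AA 1) (k - 3)"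
    by (rule coeff_tail) (use k in \<open>auto simp: numeral_fps_const\<close>)
  finally show ?thesis .
qed

lemma PP0: "fps_nth PP 0 = 1" by (simp add: PP_def numeral_fps_const)

lemma DD_alt: "DD k = fps_const ((k+1)^2) * (1 - 3 * fps_X) - fps_X^3 * AA (k+1)"
proof -
  have "(k+1)*(k+1+1) = 2*(k+1)^2 - k*(k+1)" by (simp add: algebra_simps power2_eq_square)
  hence e: "fps_const ((k+1)*(k+1+1)) = 2 * fps_const ((k+1)^2) - fps_const (k*(k+1))"
    by (simp add: numeral_fps_const)
  show ?thesis unfolding DD_def AA_def PP_def e by (simp add: algebra_simps)
qed

lemma DD0: "fps_nth (DD k) 0 = (k+1)^2"
  by (simp add: DD_def PP0)

lemma DD_tail: "m \<ge> 3 \<Longrightarrow> fps_nth (DD k) m = - fps_nth (AA (k+1)) (m - 3)"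
  unfolding DD_alt by (rule coeff_tail) (auto simp: numeral_fps_const)

lemma AA_D:
  assumes k: "k > 0"
  shows "AA k * (fps_const (-1/(k*(k+1))) * DD k - fps_X^3) = DD k"
proof -
  define a where "a = fps_const (k^2)"
  define b where "b = fps_const (k*(k+1))"
  define a' where "a' = fps_const ((k+1)^2)"
  define C where "C = fps_const (-1/(k*(k+1)))"
  have kk: "k + k*k > 0" using k by (simp add: add_pos_pos)
  have "(-1/(k*(k+1))) * (k*(k+1)) = -1" using kk by (simp add: field_simps)
  hence "C * b = fps_const (-1)" unfolding C_def b_def by simp
  hence Cb: "C * b = -1" by (simp only: fps_const_neg [symmetric] fps_const_1_eq_1)
  have aa: "a * a' = b * b" unfolding a_def a'_def b_def by (simp add: power2_eq_square algebra_simps)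
  have AAe: "AA k = a * ww - b" unfolding AA_def a_def b_def by simp
  have DDe: "DD k = a' * PP - b * fps_X^3" unfolding DD_def a'_def b_def by simp
  have "C * DD k - fps_X^3 = C * a' * PP - (C * b + 1) * fps_X^3"
    unfolding DDe by (simp add: algebra_simps)
  also have "\<dots> = C * a' * PP" using Cb by simp
  finally have s1: "C * DD k - fps_X^3 = C * a' * PP" .
  have "AA k * (C * a' * PP) = C * (a * a') * (ww * PP) - (C * b) * a' * PP"
    unfolding AAe by (simp add: algebra_simps)
  also have "\<dots> = (C * b) * b * fps_X^3 - (C * b) * a' * PP" using wP aa by (simp add: mult.assoc)
  also have "\<dots> = DD k" using Cb unfolding DDe by simp
  finally show ?thesis unfolding C_def[symmetric] s1 .
qed

lemma AA_step:
  assumes k: "k > 0"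
  shows "AA k * (fps_const (-1/(k*(k+1))) - fps_X^2 * BB k) = 1"
proof -
  have D0: "fps_nth (DD k) 0 \<noteq> 0" using k by (simp add: DD0)
  have "fps_const (-1/(k*(k+1))) - fps_X^2 * BB k = (fps_const (-1/(k*(k+1))) * DD k - fps_X^3) * inverse (DD k)"
    unfolding BB_def using D0 by (simp add: algebra_simps power_def inverse_mult_eq_1')
  hence "AA k * (fps_const (-1/(k*(k+1))) - fps_X^2 * BB k) = DD k * inverse (DD k)"
    using AA_D[OF k] by (simp add: mult.assoc[symmetric])
  also have "\<dots> = 1" using D0 by (simp add: inverse_mult_eq_1')
  finally show ?thesis .
qed

lemma BB_step: "k > 0 \<Longrightarrow> BB k * DD k = fps_X"
  unfolding BB_def using DD0[of k] by (simp add: mult.assoc inverse_mult_eq_1)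

definition HA :: "real \<Rightarrow> nat \<Rightarrow> real" where "HA k n = det (hank (fps_nth (AA k)) n)"
definition HB :: "real \<Rightarrow> nat \<Rightarrow> real" where "HB k n = det (hank (fps_nth (BB k)) n)"

lemma hank0: "det (hank f 0) = 1"
  by (rule det_dim_zero) (simp add: hank_def)

lemma hank1: "det (hank f 1) = f 0"
  by (subst det_single) (auto simp: hank_def)

lemma HA_rec:
  assumes k: "k > 0" and n: "n \<ge> 1"
  shows "HA k n = (-(k*(k+1)))^(2*n-1) * HB k (n-1)"
proof -
  have kk: "k*(k+1) \<noteq> 0" using k by (simp add: add_pos_pos)
  have "det (hank (fps_nth (AA k)) n) =
     (-1)^((0+1)*0 div 2) * (1/(-1/(k*(k+1))))^(2*n-0-1) * det (hank (fps_nth (BB k)) (n-0-1))"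
  proof (rule sx_step)
    show "AA k * (fps_const (-1/(k*(k+1))) - fps_X^2 * BB k) = fps_X ^ 0" using AA_step[OF k] by simp
    show "fps_nth (fps_const (-1/(k*(k+1))) - fps_X^2 * BB k) 0 = -1/(k*(k+1))" by simp
    show "-1/(k*(k+1)) \<noteq> 0" using kk by simp
    fix m :: nat assume "m \<ge> 0 + 2"
    thus "fps_nth (fps_const (-1/(k*(k+1))) - fps_X^2 * BB k) m = - fps_nth (BB k) (m - 0 - 2)"
      by (subst coeff_tail) auto
  qed (use n in auto)
  moreover have "1/(-1/(k*(k+1))) = -(k*(k+1))" using kk by (simp add: field_simps)
  ultimately show ?thesis unfolding HA_def HB_def by simp
qed

lemma HB_rec:
  assumes k: "k > 0" and m: "m \<ge> 2"
  shows "HB k m = - ((1/(k+1)^2)^(2*m-2) * HA (k+1) (m-2))"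
proof -
  have "det (hank (fps_nth (BB k)) m) =
     (-1)^((1+1)*1 div 2) * (1/(k+1)^2)^(2*m-1-1) * det (hank (fps_nth (AA (k+1))) (m-1-1))"
  proof (rule sx_step)
    show "BB k * DD k = fps_X ^ 1" using BB_step[OF k] by simp
    show "fps_nth (DD k) 0 = (k+1)^2" by (rule DD0)
    show "(k+1)^2 \<noteq> (0::real)" using k by simp
    fix j :: nat assume "j \<ge> 1 + 2"
    hence j3: "j \<ge> 3" by simp
    have e: "j - 1 - 2 = j - 3" by arith
    show "fps_nth (DD k) j = - fps_nth (AA (k+1)) (j - 1 - 2)" unfolding e by (rule DD_tail[OF j3])
  qed (use m in auto)
  thus ?thesis unfolding HA_def HB_def by (simp add: numeral_2_eq_2)
qed

lemma HB1: "HB k 1 = 0"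
  unfolding HB_def hank1 BB_def by simp

lemma HB1': "HB k (Suc 0) = 0" using HB1 by simp

lemma HA3:
  assumes k: "k > 0"
  shows "HA k (n+3) * (k+1)^(2*n) = k^(2*n+5) * (k+1) * HA (k+1) n"
proof -
  define y where "y = k + 1"
  have y: "y > 0" using k unfolding y_def by simp
  have ex: "2*(n+3)-1 = 2*n+5" "n+3-1 = n+2" "2*(n+2)-2 = 2*n+2" "n+2-2 = n" by simp_all
  have "1 \<le> n+3" by simp
  note h1 = HA_rec[OF k this, unfolded ex]
  have "2 \<le> n+2" by simp
  note h2 = HB_rec[OF k this, unfolded ex]
  have "HA k (n+3) = (-(k*y))^(2*n+5) * HB k (n+2)"
    using h1 unfolding y_def .
  also have "HB k (n+2) = - ((1/y^2)^(2*n+2) * HA (k+1) n)"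
    using h2 unfolding y_def .
  also have "(-(k*y))^(2*n+5) = - (k^(2*n+5) * y^(2*n+5))"
    by (simp add: power_mult_distrib)
  finally have e: "HA k (n+3) = k^(2*n+5) * y^(2*n+5) * HA (k+1) n / (y^2)^(2*n+2)"
    by (simp add: power_one_over field_simps)
  have ee: "2*(2*n+2) = 4*n+4" by simp
  have "(y^2)^(2*n+2) = y^(4*n+4)" by (simp only: power_mult[symmetric] ee)
  hence "HA k (n+3) * y^(2*n) = k^(2*n+5) * HA (k+1) n * (y^(2*n+5) * y^(2*n) / y^(4*n+4))"
    using e by simp
  also have "y^(2*n+5) * y^(2*n) = y^(4*n+4) * y"
  proof -
    have ee2: "2*n+5 + 2*n = Suc (4*n+4)" by simp
    have "y^(2*n+5) * y^(2*n) = y^(Suc (4*n+4))" by (simp only: power_add[symmetric] ee2)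
    thus ?thesis by (simp only: power_Suc mult.commute)
  qed
  finally show ?thesis using y unfolding y_def by simp
qed

lemma HA_closed:
  assumes k: "k > 0"
  shows "k * HA k (3*m) = k^(6*m) * (k+m) \<and> HA k (3*m+1) = - (k^(6*m+1) * (k+m+1)) \<and> HA k (3*m+2) = 0"
  using k
proof (induction m arbitrary: k)
  case 0
  have kk: "0 < k" using 0 by simp
  have a0: "HA k 0 = 1" unfolding HA_def by (rule hank0)
  have a1: "HA k 1 = -(k*(k+1))" using HA_rec[OF kk, of 1] by (simp add: HB_def hank0)
  have a2: "HA k 2 = 0" using HA_rec[OF kk, of 2] by (simp add: HB1')
  have e: "3*(0::nat) = 0" "(0::nat)+1 = 1" "(0::nat)+2 = 2" by simp_all
  show ?case unfolding e
  proof (intro conjI)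
    show "k * HA k 0 = k^(6*0) * (k + real 0)" using a0 by simp
    show "HA k 1 = - (k^(6*0+1) * (k + real 0 + 1))" using a1 by simp
    show "HA k 2 = 0" by (rule a2)
  qed
next
  case (Suc m)
  have k: "k > 0" using Suc.prems by simp
  have k1: "k + 1 > 0" using k by simp
  note IH = Suc.IH[OF k1]
  have y0: "(k+1) \<noteq> 0" using k by simp
  have ex0: "2*(3*m) = 6*m" "2*(3*m)+5 = 6*m+5" by simp_all
  have ex1: "3*m+1+3 = 3*m+4" "2*(3*m+1) = 6*m+2" "6*m+2+5 = 6*m+7" by simp_all
  have ex2: "3*m+2+3 = 3*m+5" "2*(3*m+2) = 6*m+4" "6*m+4+5 = 6*m+9" by simp_all
  have r0: "HA k (3*m+3) * (k+1)^(6*m) = k^(6*m+5) * (k+1) * HA (k+1) (3*m)"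
    using HA3[OF k, of "3*m"] unfolding ex0 .
  have r1: "HA k (3*m+4) * (k+1)^(6*m+2) = k^(6*m+7) * (k+1) * HA (k+1) (3*m+1)"
    using HA3[OF k, of "3*m+1"] unfolding ex1 .
  have r2: "HA k (3*m+5) * (k+1)^(6*m+4) = k^(6*m+9) * (k+1) * HA (k+1) (3*m+2)"
    using HA3[OF k, of "3*m+2"] unfolding ex2 .
  have I0: "(k+1) * HA (k+1) (3*m) = (k+1)^(6*m) * (k+1+real m)"
    and I1: "HA (k+1) (3*m+1) = - ((k+1)^(6*m+1) * (k+1+real m+1))"
    and I2: "HA (k+1) (3*m+2) = 0" using IH by auto
  have "HA k (3*m+3) * (k+1)^(6*m) = k^(6*m+5) * ((k+1) * HA (k+1) (3*m))"
    using r0 by (simp only: mult.assoc)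
  also have "\<dots> = (k^(6*m+5) * (k+m+1)) * (k+1)^(6*m)" unfolding I0 by (simp add: algebra_simps)
  finally have c0: "HA k (3*m+3) * (k+1)^(6*m) = (k^(6*m+5) * (k+m+1)) * (k+1)^(6*m)" .
  hence c0': "HA k (3*m+3) = k^(6*m+5) * (k+m+1)" using y0 by simp
  have "HA k (3*m+4) * (k+1)^(6*m+2) = k^(6*m+7) * (k+1) * HA (k+1) (3*m+1)" by (rule r1)
  also have "\<dots> = (- (k^(6*m+7) * (k+m+2))) * ((k+1) * (k+1)^(6*m+1))"
    unfolding I1 by (simp add: algebra_simps)
  also have "(k+1) * (k+1)^(6*m+1) = (k+1)^(6*m+2)" by simp
  finally have c1: "HA k (3*m+4) * (k+1)^(6*m+2) = (- (k^(6*m+7) * (k+m+2))) * (k+1)^(6*m+2)" .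
  have Y0: "(k+1)^(6*m+2) \<noteq> 0" using y0 by simp
  have c1': "HA k (3*m+4) = - (k^(6*m+7) * (k+m+2))" using mult_right_cancel[OF Y0] c1 by blast
  have "HA k (3*m+5) * (k+1)^(6*m+4) = 0" using r2 I2 by simp
  hence c2': "HA k (3*m+5) = 0" using y0 by simp
  have e1: "3 * Suc m = 3*m+3" "3*m+3 + 1 = 3*m+4" "3*m+3 + 2 = 3*m+5" by simp_all
  have p1: "6 * Suc m = Suc (6*m+5)" "6 * Suc m + 1 = 6*m+7" by simp_all
  show ?case unfolding e1
  proof (intro conjI)
    show "k * HA k (3*m+3) = k^(6 * Suc m) * (k + real (Suc m))"
      unfolding c0' p1(1) power_Suc by (simp add: algebra_simps)
    show "HA k (3*m+4) = - (k^(6 * Suc m + 1) * (k + real (Suc m) + 1))"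
      unfolding c1' p1(2) by (simp add: algebra_simps)
    show "HA k (3*m+5) = 0" by (rule c2')
  qed
qed

lemma hankel_eq: "hankel_det MM 3 (-3) N = det (hank (fps_nth ww) N)"
proof -
  have e: "pow_coeff MM 3 (int i + int j + -3) = fps_nth ww (i+j)" for i j
  proof (cases "i + j < 3")
    case True thus ?thesis by (simp add: pow_coeff_def ww_def fps_X_power_mult_nth)
  next
    case False
    hence "nat (int i + int j + -3) = i + j - 3" by simp
    thus ?thesis using False by (simp add: pow_coeff_def ww_def fps_X_power_mult_nth)
  qed
  show ?thesis unfolding hankel_det_def hank_def e ..
qed

lemma HW: "N \<ge> 4 \<Longrightarrow> det (hank (fps_nth ww) N) = det (hank (fps_nth G1) (N-4))"
proof -
  assume N: "N \<ge> 4"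
  have "det (hank (fps_nth ww) N) = (-1)^((3+1)*3 div 2) * (1/1)^(2*N-3-1) * det (hank (fps_nth G1) (N-3-1))"
  proof (rule sx_step)
    show "ww * PP = fps_X ^ 3" by (rule wP)
    show "fps_nth PP 0 = 1" by (rule PP0)
    fix k :: nat assume "k \<ge> 3 + 2"
    thus "fps_nth PP k = - fps_nth G1 (k - 3 - 2)" using PP_tail0[of k] by simp
  qed (use N in auto)
  thus ?thesis by simp
qed

lemma HG1: "M \<ge> 2 \<Longrightarrow> det (hank (fps_nth G1) M) = - HA 1 (M-2)"
proof -
  assume M: "M \<ge> 2"
  have "det (hank (fps_nth G1) M) = (-1)^((1+1)*1 div 2) * (1/1)^(2*M-1-1) * det (hank (fps_nth (AA 1)) (M-1-1))"
  proof (rule sx_step)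
    show "G1 * PP = fps_X ^ 1" using G1P by simp
    show "fps_nth PP 0 = 1" by (rule PP0)
    fix k :: nat assume "k \<ge> 1 + 2"
    hence k3: "k \<ge> 3" by simp
    have e: "k - 1 - 2 = k - 3" by arith
    show "fps_nth PP k = - fps_nth (AA 1) (k - 1 - 2)" unfolding e by (rule PP_tail1[OF k3])
  qed (use M in auto)
  moreover have "M - 1 - 1 = M - 2" by arith
  ultimately show ?thesis unfolding HA_def by simp
qed

lemma HG1_1: "det (hank (fps_nth G1) 1) = 0"
  unfolding hank1 G1_def by simp

lemma HG1_1': "det (hank (fps_nth G1) (Suc 0)) = 0" using HG1_1 by simp

lemma zero_row:
  assumes "N > 0" and "\<And>j. j < N \<Longrightarrow> f j = 0"
  shows "det (hank f N) = 0"
proof -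
  have "det (hank f N) = (\<Sum>j<N. hank f N $$ (0,j) * cofactor (hank f N) 0 j)"
    by (rule laplace_expansion_row) (use assms in \<open>auto simp: hank_def\<close>)
  also have "\<dots> = 0" by (rule sum.neutral) (use assms in \<open>auto simp: hank_def\<close>)
  finally show ?thesis .
qed

lemma ww_low: "j < 3 \<Longrightarrow> fps_nth ww j = 0"
  by (simp add: ww_def fps_X_power_mult_nth)

lemma HA1:
  "HA 1 (3*m) = 1 + real m" "HA 1 (3*m+1) = - (real m + 2)" "HA 1 (3*m+2) = 0"
  using HA_closed[of 1 m] by auto

theorem proposition4p2:
  shows "hankel_det motzkin_gf 3 (-3) 0 = 1
    \<and> hankel_det motzkin_gf 3 (-3) 1 = 0
    \<and> hankel_det motzkin_gf 3 (-3) 2 = 0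
    \<and> hankel_det motzkin_gf 3 (-3) 3 = 0
    \<and> (\<forall>k::nat. k \<ge> 1 \<longrightarrow>
          hankel_det motzkin_gf 3 (-3) (3 * k + 1) = real k
        \<and> hankel_det motzkin_gf 3 (-3) (3 * k + 2) = 0
        \<and> hankel_det motzkin_gf 3 (-3) (3 * k + 3) = - real k)"
proof -
  have D: "hankel_det MM 3 (-3) N = det (hank (fps_nth ww) N)" for N by (rule hankel_eq)
  have p0: "hankel_det motzkin_gf 3 (-3) 0 = 1" unfolding D by (rule hank0)
  have pz: "hankel_det motzkin_gf 3 (-3) N = 0" if "0 < N" "N \<le> 3" for N
    unfolding D by (rule zero_row) (use that in \<open>auto intro: ww_low\<close>)
  have main: "hankel_det motzkin_gf 3 (-3) (3 * k + 1) = real k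
        \<and> hankel_det motzkin_gf 3 (-3) (3 * k + 2) = 0
        \<and> hankel_det motzkin_gf 3 (-3) (3 * k + 3) = - real k" if k: "k \<ge> 1" for k :: nat
  proof (intro conjI)
    have t3: "hankel_det motzkin_gf 3 (-3) (3 * k + 3) = - HA 1 (3*k+3-4-2)"
      unfolding D using k by (subst HW) (auto simp: HG1)
    also have "3*k+3-4-2 = 3*(k-1)" using k by simp
    also have "- HA 1 (3*(k-1)) = - real k" using k HA1(1)[of "k-1"] by (simp add: of_nat_diff)
    finally show "hankel_det motzkin_gf 3 (-3) (3 * k + 3) = - real k" .
    show "hankel_det motzkin_gf 3 (-3) (3 * k + 1) = real k"
    proof (cases "k = 1")
      case True thus ?thesis unfolding D by (simp add: HW hank0)
    next
      case False
      hence k2: "k \<ge> 2" using k by simp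
      have "hankel_det motzkin_gf 3 (-3) (3 * k + 1) = - HA 1 (3*k+1-4-2)"
        unfolding D using k2 by (subst HW) (auto simp: HG1)
      also have "3*k+1-4-2 = 3*(k-2)+1" using k2 by simp
      also have "- HA 1 (3*(k-2)+1) = real k" using k2 HA1(2)[of "k-2"] by (simp add: of_nat_diff)
      finally show ?thesis .
    qed
    show "hankel_det motzkin_gf 3 (-3) (3 * k + 2) = 0"
    proof (cases "k = 1")
      case True thus ?thesis unfolding D by (simp add: HW HG1_1 HG1_1')
    next
      case False
      hence k2: "k \<ge> 2" using k by simp
      have "hankel_det motzkin_gf 3 (-3) (3 * k + 2) = - HA 1 (3*k+2-4-2)"
        unfolding D using k2 by (subst HW) (auto simp: HG1)
      also have "3*k+2-4-2 = 3*(k-2)+2" using k2 by simp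
      also have "- HA 1 (3*(k-2)+2) = 0" using HA1(3)[of "k-2"] by simp
      finally show ?thesis .
    qed
  qed
  show ?thesis using p0 pz[of 1] pz[of 2] pz[of 3] main by auto
qed

end
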